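(* Consider stochastic momentum gradient descent on a 2-layer diagonal linear network as described in the context, and assume that the iterates $(u_k,v_k)$ converge to $(u_\infty,v_\infty)$, that $\Delta_\infty=|u_\infty^2-v_\infty^2|$ has nonzero coordinates, and that no coordinate of $w_{\pm,k}$ is ever exactly zero. Then the two series $$S_\pm=\frac{1}{1-\beta}\sum_{k=1}^\infty\Big[r\Big(\frac{w_{\pm,k+1}}{w_{\pm,k}}\Big)+\beta\,r\Big(\frac{w_{\pm,k}}{w_{\pm,k+1}}\Big)\Big]$$ converge to finite vectors, where $r(z)=(z-1)-\ln|z|$ for $z\neq0$ (applied coordinate-wise).
   Context: Data $x_1,\dots,x_n\in\mathbb{R}^d$, $y\in\mathbb{R}^n$. For a batch $\mathcal{B}\subset[n]$ of size $B$, $L_{\mathcal B}(\theta)=\frac{1}{2B}\sum_{i\in\mathcal B}(y_i-\langle x_i,\theta\rangle)^2$. Vector operations are coordinate-wise. Stochastic momentum gradient descent with step size $\gamma>0$, momentum $\beta\in[0,1)$ and batches $\mathcal{B}_k\subset[n]$ of size $B\in[n]$ (sampled with or without replacement): $u_{k+1}=u_k-\gamma\nabla L_{\mathcal B_k}(\theta_k)\odot v_k+\beta(u_k-u_{k-1})$, $v_{k+1}=v_k-\gamma\nabla L_{\mathcal B_k}(\theta_k)\odot u_k+\beta(v_k-v_{k-1})$, $\theta_k=u_k\odot v_k$, initialised with $u_1=u_0$, $v_1=v_0$. $w_{\pm,k}=u_k\pm v_k$, $\Delta_k=|u_k^2-v_k^2|$. *)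

theory Defs
  imports "HOL-Analysis.Analysis"
begin

definition rfun :: "real \<Rightarrow> real" where
  "rfun z = (z - 1) - ln \<bar>z\<bar>"

text \<open>Gradient of the batch loss L_B(theta) = 1/(2B) sum_{i in B} (y_i - <x_i,theta>)^2.
  A batch of size Bsz is an index sequence b 0, ..., b (Bsz-1) in {0..<n}
  (repetitions allowed, covering sampling with replacement).\<close>
definition batch_grad ::
  "(nat \<Rightarrow> real ^ 'd) \<Rightarrow> (nat \<Rightarrow> real) \<Rightarrow> nat \<Rightarrow> (nat \<Rightarrow> nat) \<Rightarrow> real ^ 'd \<Rightarrow> real ^ 'd" where
  "batch_grad x y Bsz b \<theta> =
     (\<chi> j. (1 / real Bsz) * (\<Sum>l<Bsz. (x (b l) \<bullet> \<theta> - y (b l)) * (x (b l) $ j)))"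

definition hadamard :: "real ^ 'd \<Rightarrow> real ^ 'd \<Rightarrow> real ^ 'd" where
  "hadamard a c = (\<chi> j. a $ j * c $ j)"

definition smgd ::
  "(nat \<Rightarrow> real ^ 'd) \<Rightarrow> (nat \<Rightarrow> real) \<Rightarrow> nat \<Rightarrow> (nat \<Rightarrow> nat \<Rightarrow> nat) \<Rightarrow> real \<Rightarrow> real
   \<Rightarrow> (nat \<Rightarrow> real ^ 'd) \<Rightarrow> (nat \<Rightarrow> real ^ 'd) \<Rightarrow> bool" where
  "smgd x y Bsz b \<gamma> \<beta> u v \<longleftrightarrow>
     u 1 = u 0 \<and> v 1 = v 0 \<and>
     (\<forall>k\<ge>1. \<forall>j.
        u (Suc k) $ j = u k $ j - \<gamma> * batch_grad x y Bsz (b k) (hadamard (u k) (v k)) $ j * v k $ j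
                        + \<beta> * (u k $ j - u (k - 1) $ j)
      \<and> v (Suc k) $ j = v k $ j - \<gamma> * batch_grad x y Bsz (b k) (hadamard (u k) (v k)) $ j * u k $ j
                        + \<beta> * (v k $ j - v (k - 1) $ j))"

end

theory Submission
  imports Defs
begin

lemma tel_id:
  fixes a b c s h \<beta> :: real
  assumes b: "b \<noteq> 0" and c: "c \<noteq> 0" and rec: "c = b + s * h * b + \<beta> * (b - a)"
  shows "rfun (c / b) + \<beta> * rfun (b / c) = s * h
     + ((\<beta> * (b - a) / b + (1 - \<beta>) * ln \<bar>b\<bar>) - (\<beta> * (c - b) / c + (1 - \<beta>) * ln \<bar>c\<bar>))"
proof -
  have l1: "ln \<bar>c / b\<bar> = ln \<bar>c\<bar> - ln \<bar>b\<bar>" using b c by (simp add: abs_divide ln_div)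
  have l2: "ln \<bar>b / c\<bar> = ln \<bar>b\<bar> - ln \<bar>c\<bar>" using b c by (simp add: abs_divide ln_div)
  have q: "c / b - 1 = s * h + \<beta> * (b - a) / b" using b rec by (simp add: field_simps)
  have q2: "b / c - 1 = - ((c - b) / c)" using c by (simp add: field_simps)
  show ?thesis unfolding rfun_def l1 l2 q q2 by (simp add: algebra_simps)
qed

lemma seq_facts:
  fixes w :: "nat \<Rightarrow> real" and L \<beta> :: real
  assumes nz: "\<And>k. w k \<noteq> 0" and lim: "w \<longlonglongrightarrow> L" and L: "L \<noteq> 0" and \<beta>: "0 \<le> \<beta>"
  shows "(\<lambda>k. \<beta> * (w (Suc k) - w k) / w (Suc k) + (1 - \<beta>) * ln \<bar>w (Suc k)\<bar>)
           \<longlonglongrightarrow> \<beta> * (L - L) / L + (1 - \<beta>) * ln \<bar>L\<bar>"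
    and "eventually (\<lambda>k. 0 \<le> rfun (w (k + 2) / w (k + 1)) + \<beta> * rfun (w (k + 1) / w (k + 2))) sequentially"
proof -
  have ls: "(\<lambda>k. w (Suc k)) \<longlonglongrightarrow> L" using LIMSEQ_Suc[OF lim] .
  show "(\<lambda>k. \<beta> * (w (Suc k) - w k) / w (Suc k) + (1 - \<beta>) * ln \<bar>w (Suc k)\<bar>)
           \<longlonglongrightarrow> \<beta> * (L - L) / L + (1 - \<beta>) * ln \<bar>L\<bar>"
    using L by (intro tendsto_intros ls lim) auto
  have "eventually (\<lambda>k. dist (w k) L < \<bar>L\<bar>) sequentially"
    using lim L by (simp add: tendsto_iff)
  then have ev: "eventually (\<lambda>k. 0 < w k * L) sequentially"
  proof (rule eventually_mono)
    fix k assume "dist (w k) L < \<bar>L\<bar>"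
    then have "\<bar>w k - L\<bar> < \<bar>L\<bar>" by (simp add: dist_real_def)
    then have "L - \<bar>L\<bar> < w k" "w k < L + \<bar>L\<bar>" by linarith+
    show "0 < w k * L"
    proof (cases "L > 0")
      case True
      then have "w k > 0" using \<open>L - \<bar>L\<bar> < w k\<close> by simp
      then show ?thesis using True by simp
    next
      case False
      then have "L < 0" using L by simp
      then have "w k < 0" using \<open>w k < L + \<bar>L\<bar>\<close> by simp
      then show ?thesis using \<open>L < 0\<close> by (simp add: mult_neg_neg)
    qed
  qed
  have "eventually (\<lambda>k. 0 < w (k + 1) * L \<and> 0 < w (k + 2) * L) sequentially"
  proof -
    obtain N where N: "\<And>k. k \<ge> N \<Longrightarrow> 0 < w k * L" using ev unfolding eventually_sequentially by blast
    show ?thesis unfolding eventually_sequentially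
      by (rule exI[of _ N]) (auto intro!: N)
  qed
  then show "eventually (\<lambda>k. 0 \<le> rfun (w (k + 2) / w (k + 1)) + \<beta> * rfun (w (k + 1) / w (k + 2))) sequentially"
  proof (rule eventually_mono)
    fix k assume h: "0 < w (k + 1) * L \<and> 0 < w (k + 2) * L"
    have pos: "0 < w (k + 2) / w (k + 1)" "0 < w (k + 1) / w (k + 2)"
      using h L by (auto simp: zero_less_mult_iff zero_less_divide_iff)
    have r: "0 \<le> rfun z" if "0 < z" for z
      using ln_le_minus_one[OF that] that by (simp add: rfun_def)
    show "0 \<le> rfun (w (k + 2) / w (k + 1)) + \<beta> * rfun (w (k + 1) / w (k + 2))"
      using r[OF pos(1)] r[OF pos(2)] \<beta> by simp
  qed
qed

theorem lemma2:
  fixes x :: "nat \<Rightarrow> real ^ 'd" and y :: "nat \<Rightarrow> real" and n Bsz :: nat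
    and b :: "nat \<Rightarrow> nat \<Rightarrow> nat" and \<gamma> \<beta> :: real
    and u v :: "nat \<Rightarrow> real ^ 'd" and u_inf v_inf :: "real ^ 'd"
  assumes "1 \<le> Bsz" and "Bsz \<le> n"
    and "\<forall>k l. l < Bsz \<longrightarrow> b k l < n"
    and "\<gamma> > 0" and "0 \<le> \<beta>" and "\<beta> < 1"
    and "smgd x y Bsz b \<gamma> \<beta> u v"
    and "u \<longlonglongrightarrow> u_inf" and "v \<longlonglongrightarrow> v_inf"
    and "\<forall>j. \<bar>(u_inf $ j)\<^sup>2 - (v_inf $ j)\<^sup>2\<bar> \<noteq> 0"
    and "\<forall>k j. u k $ j + v k $ j \<noteq> 0 \<and> u k $ j - v k $ j \<noteq> 0"
  shows "\<exists>S_plus S_minus :: real ^ 'd.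
     ((\<lambda>k. \<chi> j. (1 / (1 - \<beta>)) *
          (rfun ((u (k + 2) $ j + v (k + 2) $ j) / (u (k + 1) $ j + v (k + 1) $ j))
           + \<beta> * rfun ((u (k + 1) $ j + v (k + 1) $ j) / (u (k + 2) $ j + v (k + 2) $ j))))
        sums S_plus)
   \<and> ((\<lambda>k. \<chi> j. (1 / (1 - \<beta>)) *
          (rfun ((u (k + 2) $ j - v (k + 2) $ j) / (u (k + 1) $ j - v (k + 1) $ j))
           + \<beta> * rfun ((u (k + 1) $ j - v (k + 1) $ j) / (u (k + 2) $ j - v (k + 2) $ j))))
        sums S_minus)"
proof -
  define P where "P = (\<lambda>k j. (1 / (1 - \<beta>)) *
          (rfun ((u (k + 2) $ j + v (k + 2) $ j) / (u (k + 1) $ j + v (k + 1) $ j))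
           + \<beta> * rfun ((u (k + 1) $ j + v (k + 1) $ j) / (u (k + 2) $ j + v (k + 2) $ j))))"
  define M where "M = (\<lambda>k j. (1 / (1 - \<beta>)) *
          (rfun ((u (k + 2) $ j - v (k + 2) $ j) / (u (k + 1) $ j - v (k + 1) $ j))
           + \<beta> * rfun ((u (k + 1) $ j - v (k + 1) $ j) / (u (k + 2) $ j - v (k + 2) $ j))))"
  have summ: "summable (\<lambda>k. P k j) \<and> summable (\<lambda>k. M k j)" for j
  proof -
    define wp where "wp = (\<lambda>k. u k $ j + v k $ j)"
    define wm where "wm = (\<lambda>k. u k $ j - v k $ j)"
    define h where "h = (\<lambda>k. \<gamma> * batch_grad x y Bsz (b k) (hadamard (u k) (v k)) $ j)"
    have sm: "\<forall>k\<ge>1. \<forall>j.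
        u (Suc k) $ j = u k $ j - \<gamma> * batch_grad x y Bsz (b k) (hadamard (u k) (v k)) $ j * v k $ j
                        + \<beta> * (u k $ j - u (k - 1) $ j)
      \<and> v (Suc k) $ j = v k $ j - \<gamma> * batch_grad x y Bsz (b k) (hadamard (u k) (v k)) $ j * u k $ j
                        + \<beta> * (v k $ j - v (k - 1) $ j)"
      using assms(7) unfolding smgd_def by blast
    have recp: "wp (k + 2) = wp (k + 1) + (-1) * h (k + 1) * wp (k + 1) + \<beta> * (wp (k + 1) - wp k)" for k
      using sm[rule_format, of "k+1" j] unfolding wp_def h_def by (simp add: algebra_simps)
    have recm: "wm (k + 2) = wm (k + 1) + 1 * h (k + 1) * wm (k + 1) + \<beta> * (wm (k + 1) - wm k)" for k
      using sm[rule_format, of "k+1" j] unfolding wm_def h_def by (simp add: algebra_simps)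
    have nzp: "\<And>k. wp k \<noteq> 0" and nzm: "\<And>k. wm k \<noteq> 0" using assms(11) unfolding wp_def wm_def by auto
    have limp: "wp \<longlonglongrightarrow> u_inf $ j + v_inf $ j" unfolding wp_def
      by (intro tendsto_intros assms(8,9))
    have limm: "wm \<longlonglongrightarrow> u_inf $ j - v_inf $ j" unfolding wm_def
      by (intro tendsto_intros assms(8,9))
    have "(u_inf $ j + v_inf $ j) * (u_inf $ j - v_inf $ j) \<noteq> 0"
      using assms(10) by (simp add: power2_eq_square algebra_simps)
    then have Lp: "u_inf $ j + v_inf $ j \<noteq> 0" and Lm: "u_inf $ j - v_inf $ j \<noteq> 0" by auto
    define G where "G = (\<lambda>w k. \<beta> * (w (Suc k) - w k) / w (Suc k) + (1 - \<beta>) * ln \<bar>w (Suc (k::nat))\<bar>::real)"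
    note fp = seq_facts[OF nzp limp Lp assms(5)]
    note fm = seq_facts[OF nzm limm Lm assms(5)]
    have Pk: "P k j = (1 / (1 - \<beta>)) * ((-1) * h (k + 1) + (G wp k - G wp (Suc k)))" for k
      unfolding P_def G_def using tel_id[OF nzp nzp recp[of k]] unfolding wp_def
      by (simp add: numeral_2_eq_2)
    have Mk: "M k j = (1 / (1 - \<beta>)) * (1 * h (k + 1) + (G wm k - G wm (Suc k)))" for k
      unfolding M_def G_def using tel_id[OF nzm nzm recm[of k]] unfolding wm_def
      by (simp add: numeral_2_eq_2)
    have PM: "P k j + M k j = (\<lambda>k. (1 / (1 - \<beta>)) * (G wp k + G wm k)) k
                  - (\<lambda>k. (1 / (1 - \<beta>)) * (G wp k + G wm k)) (Suc k)" for k
      unfolding Pk Mk by (simp add: algebra_simps)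
    have "(\<lambda>k. (1 / (1 - \<beta>)) * (G wp k + G wm k)) \<longlonglongrightarrow>
           (1 / (1 - \<beta>)) * ((\<beta> * (u_inf $ j + v_inf $ j - (u_inf $ j + v_inf $ j)) / (u_inf $ j + v_inf $ j) + (1 - \<beta>) * ln \<bar>u_inf $ j + v_inf $ j\<bar>)
             + (\<beta> * (u_inf $ j - v_inf $ j - (u_inf $ j - v_inf $ j)) / (u_inf $ j - v_inf $ j) + (1 - \<beta>) * ln \<bar>u_inf $ j - v_inf $ j\<bar>))"
      unfolding G_def by (intro tendsto_intros fp(1) fm(1))
    from telescope_sums'[OF this]
    have sPM: "summable (\<lambda>k. P k j + M k j)" unfolding PM by (rule sums_summable)
    have posP: "eventually (\<lambda>k. 0 \<le> P k j) sequentially"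
      using fp(2) assms(6) unfolding P_def wp_def by (auto elim!: eventually_mono)
    have posM: "eventually (\<lambda>k. 0 \<le> M k j) sequentially"
      using fm(2) assms(6) unfolding M_def wm_def by (auto elim!: eventually_mono)
    have "summable (\<lambda>k. P k j)"
      by (rule summable_comparison_test_ev[OF _ sPM])
        (use eventually_conj[OF posP posM] in \<open>auto elim!: eventually_mono\<close>)
    moreover have "summable (\<lambda>k. M k j)"
      by (rule summable_comparison_test_ev[OF _ sPM])
        (use eventually_conj[OF posP posM] in \<open>auto elim!: eventually_mono\<close>)
    ultimately show ?thesis by blast
  qed
  have vec: "(\<lambda>k. \<chi> j. F k j) sums (\<chi> j. suminf (\<lambda>k. F k j))"
    if "\<And>j. summable (\<lambda>k. F k j)" for F :: "nat \<Rightarrow> 'd \<Rightarrow> real"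
  proof -
    have eq: "(\<lambda>n. \<Sum>k<n. \<chi> j. F k j) = (\<lambda>n. \<chi> j. \<Sum>k<n. F k j)"
      by (rule ext) (simp add: vec_eq_iff)
    show ?thesis unfolding sums_def eq
      by (intro tendsto_vec_lambda summable_LIMSEQ that)
  qed
  show ?thesis
    using vec[of P, OF conjunct1[OF summ]] vec[of M, OF conjunct2[OF summ]]
    unfolding P_def M_def by blast
qed

end
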